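(* Let $f(x)=\frac1n\sum_{i=1}^nf_i(x)$ on $\mathbb{R}^d$ where each $f_i$ is $\mu_i$-strongly convex and $L_i$-smooth, and let $x^*$ be the minimizer of $f$. Consider SGD with stepsize $\gamma_k:=\frac1{\sqrt{k+1}}\min\left\{\frac{f_{\mathcal S_k}(x^k)-\ell^*_{\mathcal S_k}}{\|\nabla f_{\mathcal S_k}(x^k)\|^2},\ \gamma_{k-1}\sqrt k\right\}$ for $k\ge1$, and $\gamma_0:=\min\left\{\frac{f_{\mathcal S_0}(x^0)-\ell^*_{\mathcal S_0}}{\|\nabla f_{\mathcal S_0}(x^0)\|^2},\ \gamma_b\right\}$. Then for every $K\ge1$, $$\mathbb{E}[f(\bar x^K)-f(x^* )]\le\frac{2\tilde LD^2_{\max}+2\hat\sigma_B^2}{\sqrt K},$$ where $\bar x^K=\frac1K\sum_{k=0}^{K-1}x^k$, $\tilde L:=\max\{\max_iL_i,\frac1{2\gamma_b}\}$, and $$D^2_{\max}:=\max\left\{\|x^0-x^*\|^2,\ \frac{2\gamma_b\hat\sigma^2_{B,\max}}{\min\left\{\frac{\mu_{\min}}{2L_{\max}},\mu_{\min}\gamma_b\right\}}\right\}$$ with $\mu_{\min}=\min_i\mu_i$, $L_{\max}=\max_iL_i$.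
   Context: Minibatches: fix a batch size $B$; at each iteration a subset $\mathcal S_k\subseteq[n]$ with $|\mathcal S_k|=B$ is sampled uniformly at random, independently across iterations. For $\mathcal S\subseteq[n]$, $f_{\mathcal S}:=\frac1{|\mathcal S|}\sum_{i\in\mathcal S}f_i$, $f^*_{\mathcal S}:=\inf_xf_{\mathcal S}(x)$, and $\ell^*_{\mathcal S}$ is a given real number with $\ell^*_{\mathcal S}\le f^*_{\mathcal S}$. SGD: $x^{k+1}=x^k-\gamma_k\nabla f_{\mathcal S_k}(x^k)$ from given $x^0$; $\gamma_b>0$ is a fixed constant; if $\nabla f_{\mathcal S_k}(x^k)=0$ the iterate is not updated. $\hat\sigma_B^2:=\mathbb{E}_{\mathcal S}[f_{\mathcal S}(x^* )-\ell^*_{\mathcal S}]$ with $\mathcal S$ uniform over subsets of size $B$; $\hat\sigma^2_{B,\max}:=\max_{|\mathcal S|=B}[f_{\mathcal S}(x^* )-\ell^*_{\mathcal S}]$. *)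

theory Defs
  imports "HOL-Analysis.Analysis"
begin

definition strongly_convex :: "('a::real_normed_vector \<Rightarrow> real) \<Rightarrow> real \<Rightarrow> bool" where
  "strongly_convex f \<mu> \<longleftrightarrow>
     (\<forall>x y t. 0 \<le> t \<and> t \<le> 1 \<longrightarrow>
        f (t *\<^sub>R x + (1 - t) *\<^sub>R y)
          \<le> t * f x + (1 - t) * f y - \<mu> / 2 * t * (1 - t) * (norm (x - y))\<^sup>2)"

definition L_smooth :: "('a::real_inner \<Rightarrow> real) \<Rightarrow> real \<Rightarrow> bool" where
  "L_smooth f L \<longleftrightarrow>
     (\<exists>g. (\<forall>x. GDERIV f x :> g x) \<and> (\<forall>x y. norm (g x - g y) \<le> L * norm (x - y)))"

definition grad :: "('a::real_inner \<Rightarrow> real) \<Rightarrow> 'a \<Rightarrow> 'a" where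
  "grad f x = (SOME D. GDERIV f x :> D)"

definition fS :: "(nat \<Rightarrow> 'a \<Rightarrow> real) \<Rightarrow> nat set \<Rightarrow> 'a \<Rightarrow> real" where
  "fS fs S x = (\<Sum>i\<in>S. fs i x) / real (card S)"

definition batches :: "nat \<Rightarrow> nat \<Rightarrow> nat set set" where
  "batches n B = {S. S \<subseteq> {..<n} \<and> card S = B}"

text \<open>min{ (f_S(x) - l*_S) / ||grad f_S(x)||^2 , c }; when the gradient vanishes the
  Polyak ratio is read as +infinity, so the min is c\<close>
definition polyak_cap ::
  "(nat \<Rightarrow> 'a::real_inner \<Rightarrow> real) \<Rightarrow> (nat set \<Rightarrow> real) \<Rightarrow> nat set \<Rightarrow> 'a \<Rightarrow> real \<Rightarrow> real" where
  "polyak_cap fs ls S x c =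
     (if grad (fS fs S) x = 0 then c
      else min ((fS fs S x - ls S) / (norm (grad (fS fs S) x))\<^sup>2) c)"

definition sgd_step ::
  "(nat \<Rightarrow> 'a::real_inner \<Rightarrow> real) \<Rightarrow> nat set \<Rightarrow> 'a \<Rightarrow> real \<Rightarrow> 'a" where
  "sgd_step fs S x \<gamma> = (if grad (fS fs S) x = 0 then x else x - \<gamma> *\<^sub>R grad (fS fs S) x)"

text \<open>state k = (x^k, gamma_k) for a fixed realisation ss of the minibatch sequence\<close>
primrec sgd_state ::
  "(nat \<Rightarrow> 'a::real_inner \<Rightarrow> real) \<Rightarrow> (nat set \<Rightarrow> real) \<Rightarrow> real \<Rightarrow> 'a \<Rightarrow> (nat \<Rightarrow> nat set)
     \<Rightarrow> nat \<Rightarrow> 'a \<times> real" where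
  "sgd_state fs ls \<gamma>b x0 ss 0 = (x0, polyak_cap fs ls (ss 0) x0 \<gamma>b)"
| "sgd_state fs ls \<gamma>b x0 ss (Suc k) =
     (let (x, \<gamma>) = sgd_state fs ls \<gamma>b x0 ss k;
          x' = sgd_step fs (ss k) x \<gamma>
      in (x', polyak_cap fs ls (ss (Suc k)) x' (\<gamma> * sqrt (real (Suc k))) / sqrt (real (Suc k) + 1)))"

definition sgd_x where "sgd_x fs ls \<gamma>b x0 ss k = fst (sgd_state fs ls \<gamma>b x0 ss k)"

text \<open>Expectation over i.i.d. uniform minibatches S_0,...,S_{K-1}: uniform average over all
  length-K lists of size-B subsets of [n]\<close>
definition batch_seqs :: "nat \<Rightarrow> nat \<Rightarrow> nat \<Rightarrow> nat set list set" where
  "batch_seqs n B K = {l. length l = K \<and> set l \<subseteq> batches n B}"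

definition expect_seq :: "nat \<Rightarrow> nat \<Rightarrow> nat \<Rightarrow> (nat set list \<Rightarrow> real) \<Rightarrow> real" where
  "expect_seq n B K h = (\<Sum>l\<in>batch_seqs n B K. h l) / real (card (batch_seqs n B K))"

end

theory Submission
  imports Defs
begin



lemma path_deriv:
  fixes f :: "'a::real_inner \<Rightarrow> real"
  assumes "GDERIV f (x + t *\<^sub>R h) :> D"
  shows "((\<lambda>s. f (x + s *\<^sub>R h)) has_real_derivative (D \<bullet> h)) (at t)"
proof -
  have d1: "((\<lambda>s. x + s *\<^sub>R h) has_derivative (\<lambda>s. s *\<^sub>R h)) (at t)"
    by (auto intro!: derivative_eq_intros)
  have d2: "(f has_derivative (\<lambda>v. v \<bullet> D)) (at (x + t *\<^sub>R h))"
    using assms by (simp add: gderiv_def)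
  have "((\<lambda>s. f (x + s *\<^sub>R h)) has_derivative (\<lambda>s. (s *\<^sub>R h) \<bullet> D)) (at t)"
    using has_derivative_compose[OF d1 d2] by (simp add: o_def)
  moreover have "(\<lambda>s. (s *\<^sub>R h) \<bullet> D) = (*) (D \<bullet> h)" by (auto simp: mult.commute inner_commute)
  ultimately show ?thesis by (simp add: has_field_derivative_def)
qed

lemma descent:
  fixes f :: "'a::real_inner \<Rightarrow> real"
  assumes gd: "\<And>x. GDERIV f x :> g x"
    and lip: "\<And>x y. norm (g x - g y) \<le> L * norm (x - y)"
  shows "f y \<le> f x + g x \<bullet> (y - x) + L / 2 * (norm (y - x))\<^sup>2"
proof -
  define h where "h = y - x"
  define \<phi> where "\<phi> = (\<lambda>t. f (x + t *\<^sub>R h) - t * (g x \<bullet> h) - L / 2 * t\<^sup>2 * (norm h)\<^sup>2)"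
  have "\<phi> 1 \<le> \<phi> 0"
  proof (rule DERIV_nonpos_imp_nonincreasing[of 0 1])
    fix t :: real assume t: "0 \<le> t" "t \<le> 1"
    have "(\<phi> has_real_derivative (g (x + t *\<^sub>R h) \<bullet> h - g x \<bullet> h - L / 2 * (2 * t) * (norm h)\<^sup>2)) (at t)"
      unfolding \<phi>_def
      by (auto intro!: derivative_eq_intros path_deriv gd)
    moreover have "g (x + t *\<^sub>R h) \<bullet> h - g x \<bullet> h - L / 2 * (2 * t) * (norm h)\<^sup>2 \<le> 0"
    proof -
      have "g (x + t *\<^sub>R h) \<bullet> h - g x \<bullet> h = (g (x + t *\<^sub>R h) - g x) \<bullet> h"
        by (simp add: inner_diff_left)
      also have "\<dots> \<le> norm (g (x + t *\<^sub>R h) - g x) * norm h"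
        by (rule norm_cauchy_schwarz)
      also have "\<dots> \<le> L * norm (t *\<^sub>R h) * norm h"
        using lip[of "x + t *\<^sub>R h" x] by (simp add: mult_right_mono)
      also have "\<dots> = L * t * (norm h)\<^sup>2"
        using t by (simp add: power2_eq_square)
      finally show ?thesis by simp
    qed
    ultimately show "\<exists>y. (\<phi> has_real_derivative y) (at t) \<and> y \<le> 0" by blast
  qed simp
  then show ?thesis unfolding \<phi>_def h_def by simp
qed




lemma psi_alg:
  fixes a fx fy s \<mu> N :: real
  shows "a - fx - s * (fy - fx - \<mu> / 2 * N) - \<mu> / 2 * s\<^sup>2 * N = a - ((1 - s) * fx + s * fy - \<mu> / 2 * (1 - s) * s * N)"
  by (simp add: power2_eq_square field_simps)

lemma sc_first_order:
  fixes f :: "'a::real_inner \<Rightarrow> real"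
  assumes sc: "strongly_convex f \<mu>" and gd: "GDERIV f x :> D"
  shows "f x + D \<bullet> (y - x) + \<mu> / 2 * (norm (y - x))\<^sup>2 \<le> f y"
proof (rule ccontr)
  assume neg: "\<not> ?thesis"
  define h where "h = y - x"
  define N where "N = (norm h)\<^sup>2"
  define C where "C = f y - f x - \<mu> / 2 * N"
  define \<psi> where "\<psi> = (\<lambda>s. f (x + s *\<^sub>R h) - f x - s * C - \<mu> / 2 * s\<^sup>2 * N)"
  have H: "\<And>t. 0 \<le> t \<Longrightarrow> t \<le> 1 \<Longrightarrow> f (t *\<^sub>R x + (1 - t) *\<^sub>R y) \<le> t * f x + (1 - t) * f y - \<mu> / 2 * t * (1 - t) * (norm (x - y))\<^sup>2"
    using sc unfolding strongly_convex_def by blast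
  have le: "\<psi> s \<le> 0" if s: "0 \<le> s" "s \<le> 1" for s
  proof -
    have "f ((1 - s) *\<^sub>R x + (1 - (1 - s)) *\<^sub>R y)
          \<le> (1 - s) * f x + (1 - (1 - s)) * f y - \<mu> / 2 * (1 - s) * (1 - (1 - s)) * (norm (x - y))\<^sup>2"
      by (rule H) (use s in auto)
    moreover have "(1 - s) *\<^sub>R x + (1 - (1 - s)) *\<^sub>R y = x + s *\<^sub>R h"
      by (simp add: h_def algebra_simps)
    moreover have "(norm (x - y))\<^sup>2 = N" by (simp add: N_def h_def norm_minus_commute)
    ultimately have "f (x + s *\<^sub>R h) \<le> (1 - s) * f x + s * f y - \<mu> / 2 * (1 - s) * s * N"
      by simp
    then show ?thesis unfolding \<psi>_def C_def psi_alg by simp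
  qed
  have "GDERIV f (x + 0 *\<^sub>R h) :> D" using gd by simp
  then have d1: "((\<lambda>s. f (x + s *\<^sub>R h)) has_real_derivative (D \<bullet> h)) (at 0)" by (rule path_deriv)
  have d2: "((\<lambda>s. s * C) has_real_derivative C) (at 0)" by (auto intro!: derivative_eq_intros)
  have d3: "((\<lambda>s. \<mu> / 2 * s\<^sup>2 * N) has_real_derivative 0) (at 0)" by (auto intro!: derivative_eq_intros)
  have "(\<psi> has_real_derivative (D \<bullet> h - 0 - C - 0)) (at 0)"
    unfolding \<psi>_def by (intro DERIV_diff d1 d2 d3 DERIV_const)
  moreover have "0 < D \<bullet> h - 0 - C - 0"
    using neg unfolding C_def h_def N_def by simp
  ultimately obtain d where d: "d > 0" "\<forall>s>0. s < d \<longrightarrow> \<psi> 0 < \<psi> (0 + s)"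
    using DERIV_pos_inc_right by blast
  define s where "s = min (d / 2) (1 / 2)"
  have s0: "s > 0" "s < d" "s \<le> 1" using d unfolding s_def by auto
  have "\<psi> 0 < \<psi> s" using d s0 by auto
  moreover have "\<psi> s \<le> 0" using le s0 by auto
  moreover have "\<psi> 0 = 0" unfolding \<psi>_def by simp
  ultimately show False by simp
qed


lemma gderiv_unique:
  fixes f :: "'a::real_inner \<Rightarrow> real"
  assumes "GDERIV f x :> D" "GDERIV f x :> D'" shows "D = D'"
proof -
  have "(\<lambda>h. h \<bullet> D) = (\<lambda>h. h \<bullet> D')"
    using has_derivative_unique assms unfolding gderiv_def by blast
  then have "(D - D') \<bullet> D = (D - D') \<bullet> D'" by metis
  then have "(D - D') \<bullet> (D - D') = 0" by (simp add: inner_diff_right)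
  then show ?thesis by simp
qed

lemma grad_eq:
  fixes f :: "'a::real_inner \<Rightarrow> real"
  assumes "GDERIV f x :> D" shows "grad f x = D"
  unfolding grad_def using gderiv_unique assms by (metis someI_ex)

locale sgdsetup =
  fixes fs :: "nat \<Rightarrow> 'a::real_inner \<Rightarrow> real" and g :: "nat \<Rightarrow> 'a \<Rightarrow> 'a"
    and \<mu> L :: "nat \<Rightarrow> real" and n B :: nat and ls :: "nat set \<Rightarrow> real"
    and \<gamma>b :: real and x0 xstar :: 'a
  assumes n_pos: "n \<ge> 1" and B1: "1 \<le> B" and Bn: "B \<le> n"
    and mu_pos: "\<And>i. i < n \<Longrightarrow> \<mu> i > 0"
    and gd: "\<And>i x. i < n \<Longrightarrow> GDERIV (fs i) x :> g i x"
    and scf: "\<And>i x y. i < n \<Longrightarrow> fs i x + g i x \<bullet> (y - x) + \<mu> i / 2 * (norm (y - x))\<^sup>2 \<le> fs i y"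
    and desc: "\<And>i x y. i < n \<Longrightarrow> fs i y \<le> fs i x + g i x \<bullet> (y - x) + L i / 2 * (norm (y - x))\<^sup>2"
    and ls_inf: "\<And>S. S \<in> batches n B \<Longrightarrow> ls S \<le> (INF x. fS fs S x)"
    and xstar_min: "\<And>x. fS fs {..<n} xstar \<le> fS fs {..<n} x"
    and gb_pos: "\<gamma>b > 0"
    and nontriv: "\<exists>v::'a. v \<noteq> 0"
begin

definition "Lmax = Max (L ` {..<n})"
definition "\<mu>min = Min (\<mu> ` {..<n})"
definition "A = batches n B"
definition "\<sigma> S = fS fs S xstar - ls S"
definition "\<sigma>max = Max (\<sigma> ` A)"
definition "gS S x = (1 / real (card S)) *\<^sub>R (\<Sum>i\<in>S. g i x)"

lemma L_le: "i < n \<Longrightarrow> L i \<le> Lmax"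
  unfolding Lmax_def by (auto intro: Max_ge)

lemma mu_ge: "i < n \<Longrightarrow> \<mu>min \<le> \<mu> i"
  unfolding \<mu>min_def by (auto intro: Min_le)

lemma mumin_pos: "\<mu>min > 0"
proof -
  have z: "0 \<in> {..<n}" using n_pos by simp
  have "\<mu>min \<in> \<mu> ` {..<n}" unfolding \<mu>min_def using z by (intro Min_in) auto
  then show ?thesis using mu_pos by auto
qed

lemma L_ge_mu: assumes "i < n" shows "\<mu> i \<le> L i"
proof -
  obtain v :: 'a where v: "v \<noteq> 0" using nontriv by blast
  have "fs i 0 + g i 0 \<bullet> (v - 0) + \<mu> i / 2 * (norm (v - 0))\<^sup>2 \<le> fs i v" using scf assms by blast
  moreover have "fs i v \<le> fs i 0 + g i 0 \<bullet> (v - 0) + L i / 2 * (norm (v - 0))\<^sup>2" using desc assms by blast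
  ultimately have "\<mu> i * (norm v)\<^sup>2 \<le> L i * (norm v)\<^sup>2" by simp
  moreover have "(norm v)\<^sup>2 > 0" using v by simp
  ultimately show ?thesis by simp
qed

lemma Lmax_ge_mumin: "\<mu>min \<le> Lmax"
  using mu_ge[of 0] L_ge_mu[of 0] L_le[of 0] n_pos by auto

lemma Lmax_pos: "Lmax > 0" using Lmax_ge_mumin mumin_pos by linarith

lemma A_finite: "finite A" unfolding A_def batches_def
  by (rule finite_subset[of _ "Pow {..<n}"]) auto

lemma A_mem: "S \<in> A \<Longrightarrow> S \<subseteq> {..<n} \<and> card S = B \<and> finite S \<and> S \<noteq> {}"
  unfolding A_def batches_def using B1 finite_subset by fastforce

lemma A_ne: "A \<noteq> {}"
proof -
  have "{..<B} \<in> A" unfolding A_def batches_def using Bn by auto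
  then show ?thesis by auto
qed

lemma gdS:
  assumes "S \<subseteq> {..<n}" "S \<noteq> {}" shows "GDERIV (fS fs S) x :> gS S x"
proof -
  have fin: "finite S" using assms finite_subset by blast
  have "((\<lambda>x. (\<Sum>i\<in>S. fs i x) / real (card S)) has_derivative
         (\<lambda>h. (\<Sum>i\<in>S. h \<bullet> g i x) / real (card S))) (at x)"
    using gd assms fin unfolding gderiv_def
    by (auto intro!: derivative_eq_intros has_derivative_sum simp: card_eq_0_iff)
  moreover have "(\<lambda>h. (\<Sum>i\<in>S. h \<bullet> g i x) / real (card S)) = (\<lambda>h. h \<bullet> gS S x)"
    unfolding gS_def by (auto simp: inner_sum_right inner_scaleR_right)
  ultimately show ?thesis unfolding gderiv_def fS_def[abs_def] by (simp add: fun_eq_iff)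
qed

lemma grad_S: "S \<subseteq> {..<n} \<Longrightarrow> S \<noteq> {} \<Longrightarrow> grad (fS fs S) x = gS S x"
  using gdS grad_eq by blast

lemma scS:
  assumes "S \<subseteq> {..<n}" "S \<noteq> {}"
  shows "fS fs S x + gS S x \<bullet> (y - x) + \<mu>min / 2 * (norm (y - x))\<^sup>2 \<le> fS fs S y"
proof -
  have fin: "finite S" using assms finite_subset by blast
  have c: "real (card S) > 0" using fin assms by (simp add: card_gt_0_iff)
  have "(\<Sum>i\<in>S. fs i x + g i x \<bullet> (y - x) + \<mu>min / 2 * (norm (y - x))\<^sup>2) \<le> (\<Sum>i\<in>S. fs i y)"
  proof (rule sum_mono)
    fix i assume "i \<in> S"
    then have i: "i < n" using assms by auto
    have "\<mu>min / 2 * (norm (y - x))\<^sup>2 \<le> \<mu> i / 2 * (norm (y - x))\<^sup>2"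
      using mu_ge[OF i] by (simp add: mult_right_mono)
    then show "fs i x + g i x \<bullet> (y - x) + \<mu>min / 2 * (norm (y - x))\<^sup>2 \<le> fs i y"
      using scf[OF i, of x y] by linarith
  qed
  then have "(\<Sum>i\<in>S. fs i x) + (\<Sum>i\<in>S. g i x) \<bullet> (y - x) + real (card S) * (\<mu>min / 2 * (norm (y - x))\<^sup>2) \<le> (\<Sum>i\<in>S. fs i y)"
    by (simp add: sum.distrib inner_sum_left)
  then have "((\<Sum>i\<in>S. fs i x) + (\<Sum>i\<in>S. g i x) \<bullet> (y - x) + real (card S) * (\<mu>min / 2 * (norm (y - x))\<^sup>2)) / real (card S) \<le> (\<Sum>i\<in>S. fs i y) / real (card S)"
    using c by (simp add: divide_right_mono)
  then show ?thesis using c unfolding fS_def gS_def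
    by (simp add: add_divide_distrib inner_scaleR_left)
qed

lemma descS:
  assumes "S \<subseteq> {..<n}" "S \<noteq> {}"
  shows "fS fs S y \<le> fS fs S x + gS S x \<bullet> (y - x) + Lmax / 2 * (norm (y - x))\<^sup>2"
proof -
  have fin: "finite S" using assms finite_subset by blast
  have c: "real (card S) > 0" using fin assms by (simp add: card_gt_0_iff)
  have "(\<Sum>i\<in>S. fs i y) \<le> (\<Sum>i\<in>S. fs i x + g i x \<bullet> (y - x) + Lmax / 2 * (norm (y - x))\<^sup>2)"
  proof (rule sum_mono)
    fix i assume "i \<in> S"
    then have i: "i < n" using assms by auto
    have "L i / 2 * (norm (y - x))\<^sup>2 \<le> Lmax / 2 * (norm (y - x))\<^sup>2"
      using L_le[OF i] by (simp add: mult_right_mono)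
    then show "fs i y \<le> fs i x + g i x \<bullet> (y - x) + Lmax / 2 * (norm (y - x))\<^sup>2"
      using desc[OF i, of y x] by linarith
  qed
  then have "(\<Sum>i\<in>S. fs i y) \<le> (\<Sum>i\<in>S. fs i x) + (\<Sum>i\<in>S. g i x) \<bullet> (y - x) + real (card S) * (Lmax / 2 * (norm (y - x))\<^sup>2)"
    by (simp add: sum.distrib inner_sum_left)
  then have "(\<Sum>i\<in>S. fs i y) / real (card S) \<le> ((\<Sum>i\<in>S. fs i x) + (\<Sum>i\<in>S. g i x) \<bullet> (y - x) + real (card S) * (Lmax / 2 * (norm (y - x))\<^sup>2)) / real (card S)"
    using c by (simp add: divide_right_mono)
  then show ?thesis using c unfolding fS_def gS_def
    by (simp add: add_divide_distrib inner_scaleR_left)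
qed

end



lemma quad_lower:
  fixes a t \<mu> :: real assumes "\<mu> > 0"
  shows "- (a\<^sup>2 / (2 * \<mu>)) \<le> - a * t + \<mu> / 2 * t\<^sup>2"
proof -
  have "- a * t + \<mu> / 2 * t\<^sup>2 + a\<^sup>2 / (2 * \<mu>) = (\<mu> * t - a)\<^sup>2 / (2 * \<mu>)"
    using assms by (simp add: field_simps power2_eq_square)
  moreover have "0 \<le> (\<mu> * t - a)\<^sup>2 / (2 * \<mu>)" using assms by simp
  ultimately show ?thesis by linarith
qed

context sgdsetup begin

lemma ls_le:
  assumes S: "S \<in> batches n B" shows "ls S \<le> fS fs S y"
proof -
  have Sm: "S \<subseteq> {..<n}" "card S = B" using S unfolding batches_def by auto
  have Sne: "S \<noteq> {}" using Sm B1 by auto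
  define G0 where "G0 = gS S xstar"
  define c where "c = fS fs S xstar - (norm G0)\<^sup>2 / (2 * \<mu>min)"
  have lb: "c \<le> fS fs S z" for z
  proof -
    have h1: "fS fs S xstar + G0 \<bullet> (z - xstar) + \<mu>min / 2 * (norm (z - xstar))\<^sup>2 \<le> fS fs S z"
      unfolding G0_def using scS Sm(1) Sne by blast
    have "(- G0) \<bullet> (z - xstar) \<le> norm (- G0) * norm (z - xstar)" by (rule norm_cauchy_schwarz)
    then have h2: "- norm G0 * norm (z - xstar) \<le> G0 \<bullet> (z - xstar)" by simp
    have h3: "- ((norm G0)\<^sup>2 / (2 * \<mu>min)) \<le> - norm G0 * norm (z - xstar) + \<mu>min / 2 * (norm (z - xstar))\<^sup>2"
      by (rule quad_lower) (rule mumin_pos)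
    show ?thesis unfolding c_def using h1 h2 h3 by linarith
  qed
  have "bdd_below (range (fS fs S))" using lb by (intro bdd_belowI) auto
  then have "(INF x. fS fs S x) \<le> fS fs S y" by (rule cINF_lower) simp
  then show ?thesis using ls_inf[OF S] by linarith
qed



lemma sigma_nonneg: "S \<in> A \<Longrightarrow> 0 \<le> \<sigma> S"
  unfolding \<sigma>_def A_def using ls_le by fastforce

lemma sigma_le: "S \<in> A \<Longrightarrow> \<sigma> S \<le> \<sigma>max"
  unfolding \<sigma>max_def using A_finite by (auto intro: Max_ge)

lemma sigmamax_nonneg: "0 \<le> \<sigma>max"
  using A_ne sigma_nonneg sigma_le by (meson ex_in_conv order_trans)

lemma gap_nonneg: "S \<in> A \<Longrightarrow> 0 \<le> fS fs S x - ls S"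
  using ls_le unfolding A_def by fastforce

lemma ratio:
  assumes S: "S \<in> A" and G: "gS S x \<noteq> 0"
  shows "(norm (gS S x))\<^sup>2 / (2 * Lmax) \<le> fS fs S x - ls S"
proof -
  define G where "G = gS S x"
  define y where "y = x - (1 / Lmax) *\<^sub>R G"
  have Sm: "S \<subseteq> {..<n}" "S \<noteq> {}" using A_mem[OF S] by auto
  have "fS fs S y \<le> fS fs S x + G \<bullet> (y - x) + Lmax / 2 * (norm (y - x))\<^sup>2"
    using descS[OF Sm] unfolding G_def by blast
  also have "G \<bullet> (y - x) = - (norm G)\<^sup>2 / Lmax"
    unfolding y_def by (simp add: power2_norm_eq_inner)
  also have "Lmax / 2 * (norm (y - x))\<^sup>2 = (norm G)\<^sup>2 / (2 * Lmax)"
    unfolding y_def using Lmax_pos by (simp add: power2_eq_square field_simps)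
  finally have "fS fs S y \<le> fS fs S x - (norm G)\<^sup>2 / (2 * Lmax)"
    using Lmax_pos by (simp add: field_simps)
  moreover have "ls S \<le> fS fs S y" using ls_le S unfolding A_def by blast
  ultimately show ?thesis unfolding G_def by linarith
qed

definition "mlow = min (1 / (2 * Lmax)) \<gamma>b"

lemma mlow_pos: "mlow > 0" unfolding mlow_def using Lmax_pos gb_pos by simp

lemma cap_le: "polyak_cap fs ls S x c \<le> c"
  unfolding polyak_cap_def by auto

lemma cap_ge: assumes "S \<in> A" shows "min (1 / (2 * Lmax)) c \<le> polyak_cap fs ls S x c"
proof (cases "gS S x = 0")
  case True then show ?thesis using grad_S A_mem[OF assms] unfolding polyak_cap_def by auto
next
  case False
  have "(norm (gS S x))\<^sup>2 / (2 * Lmax) \<le> fS fs S x - ls S" using ratio assms False by blast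
  then have "1 / (2 * Lmax) \<le> (fS fs S x - ls S) / (norm (gS S x))\<^sup>2"
    using False Lmax_pos by (simp add: field_simps)
  then show ?thesis using False grad_S A_mem[OF assms] unfolding polyak_cap_def by auto
qed

lemma cap_step: assumes "S \<in> A" "gS S x \<noteq> 0"
  shows "polyak_cap fs ls S x c * (norm (gS S x))\<^sup>2 \<le> fS fs S x - ls S"
proof -
  have "polyak_cap fs ls S x c \<le> (fS fs S x - ls S) / (norm (gS S x))\<^sup>2"
    using assms grad_S A_mem[OF assms(1)] unfolding polyak_cap_def by auto
  then show ?thesis using assms(2) by (simp add: field_simps)
qed

abbreviation "X ss k \<equiv> fst (sgd_state fs ls \<gamma>b x0 ss k)"
abbreviation "\<Gamma> ss k \<equiv> snd (sgd_state fs ls \<gamma>b x0 ss k)"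
definition "cc k = sqrt (real k + 1)"

lemma cc_ge1: "1 \<le> cc k" unfolding cc_def by simp
lemma cc_mono: "cc k \<le> cc (Suc k)" unfolding cc_def by simp

lemma X0: "X ss 0 = x0" by simp
lemma G0: "\<Gamma> ss 0 = polyak_cap fs ls (ss 0) x0 \<gamma>b" by simp
lemma XS: "X ss (Suc k) = sgd_step fs (ss k) (X ss k) (\<Gamma> ss k)"
  by (simp add: Let_def split: prod.split)
lemma GS: "\<Gamma> ss (Suc k) = polyak_cap fs ls (ss (Suc k)) (X ss (Suc k)) (\<Gamma> ss k * cc k) / cc (Suc k)"
  by (simp add: Let_def cc_def add.commute split: prod.split)

lemma capk: "\<exists>\<rho>. \<Gamma> ss k * cc k = polyak_cap fs ls (ss k) (X ss k) \<rho>"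
proof (cases k)
  case 0 then show ?thesis by (intro exI[of _ \<gamma>b]) (simp add: cc_def)
next
  case (Suc j)
  have "cc (Suc j) > 0" using cc_ge1[of "Suc j"] by linarith
  then show ?thesis unfolding Suc GS by auto
qed

lemma XS': "S = ss k \<Longrightarrow> S \<in> A \<Longrightarrow> X ss (Suc k) = (if gS S (X ss k) = 0 then X ss k else X ss k - \<Gamma> ss k *\<^sub>R gS S (X ss k))"
  using XS grad_S A_mem unfolding sgd_step_def by auto

lemma inv1: "(\<forall>j\<le>k. ss j \<in> A) \<Longrightarrow> mlow \<le> \<Gamma> ss k * cc k \<and> \<Gamma> ss k * cc k \<le> \<gamma>b"
proof (induction k)
  case 0
  have "ss 0 \<in> A" using 0 by auto
  then show ?case using cap_ge[where S="ss 0" and x=x0 and c=\<gamma>b] cap_le[where S="ss 0" and x=x0 and c=\<gamma>b] unfolding mlow_def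
    by (simp add: cc_def)
next
  case (Suc k)
  have S: "ss (Suc k) \<in> A" using Suc.prems by auto
  have IH: "mlow \<le> \<Gamma> ss k * cc k \<and> \<Gamma> ss k * cc k \<le> \<gamma>b" using Suc by auto
  have c: "cc (Suc k) > 0" using cc_ge1[of "Suc k"] by linarith
  have e: "\<Gamma> ss (Suc k) * cc (Suc k) = polyak_cap fs ls (ss (Suc k)) (X ss (Suc k)) (\<Gamma> ss k * cc k)"
    unfolding GS using c by simp
  have lo: "min (1 / (2 * Lmax)) (\<Gamma> ss k * cc k) \<le> polyak_cap fs ls (ss (Suc k)) (X ss (Suc k)) (\<Gamma> ss k * cc k)"
    using cap_ge[OF S] .
  have hi: "polyak_cap fs ls (ss (Suc k)) (X ss (Suc k)) (\<Gamma> ss k * cc k) \<le> \<Gamma> ss k * cc k"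
    using cap_le .
  have "mlow \<le> min (1 / (2 * Lmax)) (\<Gamma> ss k * cc k)" using IH unfolding mlow_def by simp
  then show ?case unfolding e using lo hi IH by linarith
qed

lemma gamma_pos: "(\<forall>j\<le>k. ss j \<in> A) \<Longrightarrow> \<Gamma> ss k > 0"
proof -
  assume a: "\<forall>j\<le>k. ss j \<in> A"
  have "mlow \<le> \<Gamma> ss k * cc k" using inv1[OF a] by blast
  then have "0 < \<Gamma> ss k * cc k" using mlow_pos by linarith
  moreover have "cc k > 0" using cc_ge1[of k] by linarith
  ultimately show ?thesis by (simp add: zero_less_mult_iff)
qed

lemma gamma_le_gb: "(\<forall>j\<le>k. ss j \<in> A) \<Longrightarrow> \<Gamma> ss k \<le> \<gamma>b"
proof -
  assume a: "\<forall>j\<le>k. ss j \<in> A"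
  have "\<Gamma> ss k * cc k \<le> \<gamma>b" using inv1[OF a] by blast
  moreover have "\<Gamma> ss k \<le> \<Gamma> ss k * cc k" using gamma_pos[OF a] cc_ge1[of k]
    by (simp add: mult_le_cancel_left1)
  ultimately show ?thesis by linarith
qed

lemma gamma_dec: "(\<forall>j\<le>Suc k. ss j \<in> A) \<Longrightarrow> \<Gamma> ss (Suc k) \<le> \<Gamma> ss k"
proof -
  assume a: "\<forall>j\<le>Suc k. ss j \<in> A"
  have a': "\<forall>j\<le>k. ss j \<in> A" using a by auto
  have c: "cc (Suc k) > 0" using cc_ge1[of "Suc k"] by linarith
  have "\<Gamma> ss (Suc k) \<le> \<Gamma> ss k * cc k / cc (Suc k)"
    unfolding GS using c cap_le by (simp add: divide_right_mono)
  also have "\<dots> \<le> \<Gamma> ss k * cc (Suc k) / cc (Suc k)"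
    using gamma_pos[OF a'] cc_mono[of k] c by (intro divide_right_mono mult_left_mono) auto
  also have "\<dots> = \<Gamma> ss k" using c by simp
  finally show ?thesis .
qed

lemma gamma_step: "(\<forall>j\<le>k. ss j \<in> A) \<Longrightarrow> gS (ss k) (X ss k) \<noteq> 0 \<Longrightarrow>
   \<Gamma> ss k * cc k * (norm (gS (ss k) (X ss k)))\<^sup>2 \<le> fS fs (ss k) (X ss k) - ls (ss k)"
  using capk[of ss k] cap_step by auto

lemma gamma_lower: "(\<forall>j\<le>k. ss j \<in> A) \<Longrightarrow> 1 / \<Gamma> ss k \<le> cc k / mlow"
proof -
  assume a: "\<forall>j\<le>k. ss j \<in> A"
  have "mlow \<le> \<Gamma> ss k * cc k" using inv1[OF a] by blast
  then show ?thesis using gamma_pos[OF a] mlow_pos by (simp add: field_simps)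
qed

end




lemma real_step_bound:
  fixes r r' D \<gamma> \<gamma>b \<sigma> \<mu> L :: real
  assumes r': "r' \<le> (1 - \<mu> * \<gamma>) * r + 2 * \<gamma> * \<sigma>"
    and r: "0 \<le> r" "r \<le> D" and g: "0 < \<gamma>" "\<gamma> \<le> \<gamma>b"
    and s: "0 \<le> \<sigma>" and mu: "0 < \<mu>" "\<mu> \<le> L"
    and D: "2 * \<gamma>b * \<sigma> / min (\<mu> / (2 * L)) (\<mu> * \<gamma>b) \<le> D"
  shows "r' \<le> D"
proof -
  define m where "m = min (\<mu> / (2 * L)) (\<mu> * \<gamma>b)"
  have L: "L > 0" using mu by linarith
  have mpos: "m > 0" unfolding m_def using mu L g by auto
  have Dm: "2 * \<gamma>b * \<sigma> \<le> D * m" using D mpos unfolding m_def[symmetric] by (simp add: field_simps)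
  have m1: "m \<le> \<mu> * \<gamma>b" unfolding m_def by simp
  have m2: "m \<le> 1 / 2"
  proof -
    have "m \<le> \<mu> / (2 * L)" unfolding m_def by simp
    also have "\<dots> \<le> 1 / 2" using mu L by (simp add: field_simps)
    finally show ?thesis .
  qed
  have D0: "0 \<le> D" using r by linarith
  have "D * m \<le> D * (\<mu> * \<gamma>b)" using D0 m1 by (simp add: mult_left_mono)
  then have "2 * \<gamma>b * \<sigma> \<le> \<gamma>b * (D * \<mu>)" using Dm by (simp add: algebra_simps)
  then have Dmu: "2 * \<sigma> \<le> D * \<mu>" using g by (simp add: mult_le_cancel_left_pos)
  have "D * m \<le> D * (1/2)" by (rule mult_left_mono) (use D0 m2 in auto)
  moreover have "2 * \<gamma> * \<sigma> \<le> 2 * \<gamma>b * \<sigma>" using g s by (intro mult_right_mono) auto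
  ultimately have D2: "2 * \<gamma> * \<sigma> \<le> D" using Dm D0 by linarith
  show ?thesis
  proof (cases "\<mu> * \<gamma> \<le> 1")
    case True
    have "(1 - \<mu> * \<gamma>) * r \<le> (1 - \<mu> * \<gamma>) * D" using True r by (simp add: mult_left_mono)
    moreover have "2 * \<gamma> * \<sigma> \<le> \<gamma> * (D * \<mu>)" using Dmu g by (simp add: mult_left_mono)
    ultimately show ?thesis using r' by (simp add: algebra_simps)
  next
    case False
    have "(1 - \<mu> * \<gamma>) * r \<le> 0" using False r by (simp add: mult_nonpos_nonneg)
    then show ?thesis using r' D2 by linarith
  qed
qed

context sgdsetup begin

definition "D2 = max ((norm (x0 - xstar))\<^sup>2) (2 * \<gamma>b * \<sigma>max / min (\<mu>min / (2 * Lmax)) (\<mu>min * \<gamma>b))"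

lemma key_facts:
  assumes a: "\<forall>j\<le>k. ss j \<in> A" and G: "gS (ss k) (X ss k) \<noteq> 0"
  shows "(norm (X ss (Suc k) - xstar))\<^sup>2 = (norm (X ss k - xstar))\<^sup>2
           - 2 * \<Gamma> ss k * (gS (ss k) (X ss k) \<bullet> (X ss k - xstar))
           + \<Gamma> ss k * (\<Gamma> ss k * (norm (gS (ss k) (X ss k)))\<^sup>2)"
    and "fS fs (ss k) (X ss k) - fS fs (ss k) xstar + \<mu>min / 2 * (norm (X ss k - xstar))\<^sup>2
           \<le> gS (ss k) (X ss k) \<bullet> (X ss k - xstar)"
    and "\<Gamma> ss k * (norm (gS (ss k) (X ss k)))\<^sup>2 \<le> (fS fs (ss k) (X ss k) - ls (ss k)) / cc k"
proof -
  have S: "ss k \<in> A" using a by auto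
  note Sm = A_mem[OF S]
  define x where "x = X ss k"
  define G where "G = gS (ss k) x"
  define \<gamma> where "\<gamma> = \<Gamma> ss k"
  have xs: "X ss (Suc k) = x - \<gamma> *\<^sub>R G" using XS'[where ss=ss and k=k, OF refl S] G unfolding x_def G_def \<gamma>_def by simp
  show "(norm (X ss (Suc k) - xstar))\<^sup>2 = (norm (X ss k - xstar))\<^sup>2
           - 2 * \<Gamma> ss k * (gS (ss k) (X ss k) \<bullet> (X ss k - xstar))
           + \<Gamma> ss k * (\<Gamma> ss k * (norm (gS (ss k) (X ss k)))\<^sup>2)"
    unfolding xs x_def[symmetric] G_def[symmetric] \<gamma>_def[symmetric]
    by (simp add: power2_norm_eq_inner inner_diff_left inner_diff_right algebra_simps inner_commute)
  have "fS fs (ss k) x + G \<bullet> (xstar - x) + \<mu>min / 2 * (norm (xstar - x))\<^sup>2 \<le> fS fs (ss k) xstar"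
    using scS[of "ss k"] Sm unfolding G_def by blast
  then show "fS fs (ss k) (X ss k) - fS fs (ss k) xstar + \<mu>min / 2 * (norm (X ss k - xstar))\<^sup>2
           \<le> gS (ss k) (X ss k) \<bullet> (X ss k - xstar)"
    unfolding x_def[symmetric] G_def[symmetric]
    by (simp add: inner_diff_right norm_minus_commute)
  have "\<gamma> * cc k * (norm G)\<^sup>2 \<le> fS fs (ss k) x - ls (ss k)"
    using gamma_step[OF a G] unfolding x_def G_def \<gamma>_def .
  moreover have "cc k > 0" using cc_ge1[of k] by linarith
  ultimately show "\<Gamma> ss k * (norm (gS (ss k) (X ss k)))\<^sup>2 \<le> (fS fs (ss k) (X ss k) - ls (ss k)) / cc k"
    unfolding x_def[symmetric] G_def[symmetric] \<gamma>_def[symmetric] by (simp add: field_simps)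
qed

lemma rbound: "(\<forall>j<k. ss j \<in> A) \<Longrightarrow> (norm (X ss k - xstar))\<^sup>2 \<le> D2"
proof (induction k)
  case 0 then show ?case unfolding D2_def by simp
next
  case (Suc k)
  have a: "\<forall>j\<le>k. ss j \<in> A" using Suc.prems by auto
  have IH: "(norm (X ss k - xstar))\<^sup>2 \<le> D2" using Suc by auto
  have S: "ss k \<in> A" using a by auto
  show ?case
  proof (cases "gS (ss k) (X ss k) = 0")
    case True
    then show ?thesis using XS'[where ss=ss and k=k, OF refl S] IH by simp
  next
    case False
    define r where "r = (norm (X ss k - xstar))\<^sup>2"
    define r' where "r' = (norm (X ss (Suc k) - xstar))\<^sup>2"
    define \<gamma> where "\<gamma> = \<Gamma> ss k"
    define G where "G = gS (ss k) (X ss k)"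
    define F where "F = fS fs (ss k) (X ss k) - ls (ss k)"
    define \<Delta> where "\<Delta> = fS fs (ss k) (X ss k) - fS fs (ss k) xstar"
    note kf = key_facts[OF a False, folded r_def r'_def \<gamma>_def G_def F_def \<Delta>_def]
    have gp: "\<gamma> > 0" using gamma_pos[OF a] unfolding \<gamma>_def .
    have F0: "0 \<le> F" unfolding F_def using gap_nonneg[OF S] .
    have "F / cc k \<le> F / 1" using F0 cc_ge1[of k] by (intro divide_left_mono) auto
    then have "F / cc k \<le> F" by simp
    then have b: "\<gamma> * (norm G)\<^sup>2 \<le> F" using kf(3) by linarith
    have sig: "\<sigma> (ss k) = F - \<Delta>" unfolding \<sigma>_def F_def \<Delta>_def by simp
    have "r' \<le> r - 2 * \<gamma> * (\<Delta> + \<mu>min / 2 * r) + \<gamma> * F"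
    proof -
      have "2 * \<gamma> * (\<Delta> + \<mu>min / 2 * r) \<le> 2 * \<gamma> * (G \<bullet> (X ss k - xstar))"
        using kf(2) gp by (simp add: mult_left_mono)
      moreover have "\<gamma> * (\<gamma> * (norm G)\<^sup>2) \<le> \<gamma> * F" using b gp by (simp add: mult_left_mono)
      ultimately show ?thesis using kf(1) by linarith
    qed
    also have "\<dots> = (1 - \<mu>min * \<gamma>) * r + \<gamma> * (2 * \<sigma> (ss k) - F)"
      unfolding sig by (simp add: algebra_simps)
    also have "\<dots> \<le> (1 - \<mu>min * \<gamma>) * r + 2 * \<gamma> * \<sigma>max"
    proof -
      have "\<gamma> * (2 * \<sigma> (ss k) - F) \<le> \<gamma> * (2 * \<sigma>max)"
        using sigma_le[OF S] F0 gp by (intro mult_left_mono) auto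
      then show ?thesis by simp
    qed
    finally have st: "r' \<le> (1 - \<mu>min * \<gamma>) * r + 2 * \<gamma> * \<sigma>max" .
    show ?thesis unfolding r'_def[symmetric]
    proof (rule real_step_bound[OF st])
      show "0 \<le> r" unfolding r_def by simp
      show "r \<le> D2" using IH unfolding r_def .
      show "0 < \<gamma>" by (rule gp)
      show "\<gamma> \<le> \<gamma>b" using gamma_le_gb[OF a] unfolding \<gamma>_def .
      show "0 \<le> \<sigma>max" by (rule sigmamax_nonneg)
      show "0 < \<mu>min" by (rule mumin_pos)
      show "\<mu>min \<le> Lmax" by (rule Lmax_ge_mumin)
      show "2 * \<gamma>b * \<sigma>max / min (\<mu>min / (2 * Lmax)) (\<mu>min * \<gamma>b) \<le> D2" unfolding D2_def by simp
    qed
  qed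
qed

lemma main_step:
  assumes a: "\<forall>j\<le>k. ss j \<in> A"
  shows "(2 - 1 / cc k) * (fS fs (ss k) (X ss k) - fS fs (ss k) xstar)
    \<le> ((norm (X ss k - xstar))\<^sup>2 - (norm (X ss (Suc k) - xstar))\<^sup>2) / \<Gamma> ss k + \<sigma> (ss k) / cc k"
proof -
  have S: "ss k \<in> A" using a by auto
  note Sm = A_mem[OF S]
  have c1: "1 \<le> cc k" by (rule cc_ge1)
  have gp: "\<Gamma> ss k > 0" using gamma_pos[OF a] .
  show ?thesis
  proof (cases "gS (ss k) (X ss k) = 0")
    case True
    have "fS fs (ss k) (X ss k) + gS (ss k) (X ss k) \<bullet> (xstar - X ss k) + \<mu>min / 2 * (norm (xstar - X ss k))\<^sup>2 \<le> fS fs (ss k) xstar"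
      using scS Sm by blast
    moreover have "0 \<le> \<mu>min / 2 * (norm (xstar - X ss k))\<^sup>2" using mumin_pos by simp
    ultimately have d: "fS fs (ss k) (X ss k) - fS fs (ss k) xstar \<le> 0" using True by simp
    have q: "0 \<le> 2 - 1 / cc k" using c1 by (simp add: divide_le_eq)
    have "(2 - 1 / cc k) * (fS fs (ss k) (X ss k) - fS fs (ss k) xstar) \<le> 0"
      using d q by (simp add: mult_nonneg_nonpos)
    moreover have "0 \<le> \<sigma> (ss k) / cc k" using sigma_nonneg[OF S] c1 by simp
    ultimately show ?thesis using XS'[where ss=ss and k=k, OF refl S] True by simp
  next
    case False
    define r where "r = (norm (X ss k - xstar))\<^sup>2"
    define r' where "r' = (norm (X ss (Suc k) - xstar))\<^sup>2"
    define \<gamma> where "\<gamma> = \<Gamma> ss k"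
    define G where "G = gS (ss k) (X ss k)"
    define F where "F = fS fs (ss k) (X ss k) - ls (ss k)"
    define \<Delta> where "\<Delta> = fS fs (ss k) (X ss k) - fS fs (ss k) xstar"
    define c where "c = cc k"
    note kf = key_facts[OF a False, folded r_def r'_def \<gamma>_def G_def F_def \<Delta>_def c_def]
    have gp: "\<gamma> > 0" using gp unfolding \<gamma>_def .
    have sig: "F = \<Delta> + \<sigma> (ss k)" unfolding \<sigma>_def F_def \<Delta>_def by simp
    have "r' \<le> r - 2 * \<gamma> * \<Delta> + \<gamma> * (F / c)"
    proof -
      have "2 * \<gamma> * \<Delta> \<le> 2 * \<gamma> * (G \<bullet> (X ss k - xstar))"
      proof -
        have "\<Delta> \<le> G \<bullet> (X ss k - xstar)" using kf(2) mumin_pos unfolding r_def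
          by (smt (verit) zero_le_divide_iff zero_le_power2 mult_nonneg_nonneg)
        then show ?thesis using gp by (simp add: mult_left_mono)
      qed
      moreover have "\<gamma> * (\<gamma> * (norm G)\<^sup>2) \<le> \<gamma> * (F / c)" using kf(3) gp by (intro mult_left_mono) auto
      ultimately show ?thesis using kf(1) by linarith
    qed
    then have "\<gamma> * ((2 - 1 / c) * \<Delta>) \<le> \<gamma> * ((r - r') / \<gamma> + \<sigma> (ss k) / c)"
    proof -
      have e: "\<gamma> * ((r - r') / \<gamma>) = r - r'" using gp by simp
      show ?thesis using \<open>r' \<le> r - 2 * \<gamma> * \<Delta> + \<gamma> * (F / c)\<close> unfolding sig distrib_left e
        by (simp add: algebra_simps add_divide_distrib)
    qed
    then have "(2 - 1 / c) * \<Delta> \<le> (r - r') / \<gamma> + \<sigma> (ss k) / c"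
      using gp by (simp add: mult_le_cancel_left_pos)
    then show ?thesis unfolding r_def r'_def \<gamma>_def \<Delta>_def c_def .
  qed
qed

end



lemma telescope_aux:
  fixes r \<gamma> :: "nat \<Rightarrow> real"
  assumes rD: "\<And>k. k < Suc m \<Longrightarrow> r k \<le> D"
    and gp: "\<And>k. k < Suc m \<Longrightarrow> \<gamma> k > 0"
    and gd: "\<And>k. Suc k < Suc m \<Longrightarrow> \<gamma> (Suc k) \<le> \<gamma> k"
  shows "(\<Sum>k<Suc m. (r k - r (Suc k)) / \<gamma> k) \<le> (D - r (Suc m)) / \<gamma> m"
  using assms
proof (induction m)
  case 0
  then show ?case by (simp add: divide_right_mono)
next
  case (Suc m)
  have IH: "(\<Sum>k<Suc m. (r k - r (Suc k)) / \<gamma> k) \<le> (D - r (Suc m)) / \<gamma> m"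
    using Suc.prems by (intro Suc.IH) auto
  have a: "0 \<le> D - r (Suc m)" using Suc.prems(1)[of "Suc m"] by simp
  have b: "0 < \<gamma> (Suc m)" "\<gamma> (Suc m) \<le> \<gamma> m" using Suc.prems by auto
  have "(D - r (Suc m)) / \<gamma> m \<le> (D - r (Suc m)) / \<gamma> (Suc m)"
    using a b by (intro divide_left_mono) auto
  then have "(\<Sum>k<Suc (Suc m). (r k - r (Suc k)) / \<gamma> k)
      \<le> (D - r (Suc m)) / \<gamma> (Suc m) + (r (Suc m) - r (Suc (Suc m))) / \<gamma> (Suc m)"
    using IH by simp
  also have "\<dots> = (D - r (Suc (Suc m))) / \<gamma> (Suc m)" by (simp add: diff_divide_distrib)
  finally show ?case .
qed

lemma telescope:
  fixes r \<gamma> :: "nat \<Rightarrow> real"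
  assumes K: "K \<ge> 1" and rD: "\<And>k. k < K \<Longrightarrow> r k \<le> D" and r0: "0 \<le> r K"
    and gp: "\<And>k. k < K \<Longrightarrow> \<gamma> k > 0"
    and gd: "\<And>k. Suc k < K \<Longrightarrow> \<gamma> (Suc k) \<le> \<gamma> k"
  shows "(\<Sum>k<K. (r k - r (Suc k)) / \<gamma> k) \<le> D / \<gamma> (K - 1)"
proof -
  obtain m where m: "K = Suc m" using K by (cases K) auto
  have "(\<Sum>k<K. (r k - r (Suc k)) / \<gamma> k) \<le> (D - r K) / \<gamma> (K - 1)"
    using telescope_aux[of m r D \<gamma>] assms unfolding m by auto
  also have "\<dots> \<le> D / \<gamma> (K - 1)"
    using r0 gp[of "K - 1"] K by (intro divide_right_mono) auto
  finally show ?thesis .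
qed

lemma sqrt_sum: "(\<Sum>k<K. 1 / sqrt (real k + 1)) \<le> 2 * sqrt (real K)"
proof (induction K)
  case 0 then show ?case by simp
next
  case (Suc K)
  define a where "a = sqrt (real K)"
  define b where "b = sqrt (real K + 1)"
  have a0: "0 \<le> a" unfolding a_def by simp
  have b0: "0 < b" unfolding b_def by simp
  have ab: "b\<^sup>2 = a\<^sup>2 + 1" unfolding a_def b_def by simp
  have "2 * b * (b - a) = 1 + (b - a)\<^sup>2" using ab by (simp add: power2_eq_square algebra_simps)
  then have "1 \<le> 2 * b * (b - a)" by (smt (verit) zero_le_power2)
  then have "1 / b \<le> 2 * (b - a)"
  proof -
    assume h: "1 \<le> 2 * b * (b - a)"
    have "2 * b * (b - a) = 2 * (b - a) * b" by simp
    then show ?thesis by (subst pos_divide_le_eq[OF b0]) (use h in linarith)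
  qed
  then have "(\<Sum>k<Suc K. 1 / sqrt (real k + 1)) \<le> 2 * a + 2 * (b - a)"
    using Suc.IH unfolding a_def b_def by simp
  also have "\<dots> = 2 * sqrt (real (Suc K))" unfolding b_def by (simp add: add.commute)
  finally show ?case .
qed

definition "LL A m = {l. length l = m \<and> set l \<subseteq> A}"

lemma LL_finite: "finite A \<Longrightarrow> finite (LL A m)"
  unfolding LL_def using finite_lists_length_eq[of A m] by (simp add: conj_commute)

lemma LL_ne: "A \<noteq> {} \<Longrightarrow> LL A m \<noteq> {}"
proof -
  assume "A \<noteq> {}" then obtain S where "S \<in> A" by blast
  then have "replicate m S \<in> LL A m" unfolding LL_def by auto
  then show ?thesis by blast
qed

lemma decomp:
  assumes fin: "finite A" and k: "k < K"
  shows "(\<Sum>l\<in>LL A K. h l) = (\<Sum>p\<in>LL A k. \<Sum>S\<in>A. \<Sum>s\<in>LL A (K - Suc k). h (p @ S # s))"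
proof -
  define j where "j = K - Suc k"
  have bij: "bij_betw (\<lambda>(p, S, s). p @ S # s) (LL A k \<times> (A \<times> LL A j)) (LL A K)"
  proof (rule bij_betwI')
    fix u v assume u: "u \<in> LL A k \<times> (A \<times> LL A j)" and v: "v \<in> LL A k \<times> (A \<times> LL A j)"
    obtain p S s where uu: "u = (p, S, s)" by (cases u) auto
    obtain p' S' s' where vv: "v = (p', S', s')" by (cases v) auto
    have "length p = k" "length p' = k" using u v unfolding uu vv LL_def by auto
    then show "((case u of (p, S, s) \<Rightarrow> p @ S # s) = (case v of (p, S, s) \<Rightarrow> p @ S # s)) = (u = v)"
      unfolding uu vv by auto
  next
    fix u assume "u \<in> LL A k \<times> (A \<times> LL A j)"
    then show "(case u of (p, S, s) \<Rightarrow> p @ S # s) \<in> LL A K"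
      unfolding LL_def j_def using k by auto
  next
    fix l assume l: "l \<in> LL A K"
    have len: "length l = K" and sl: "set l \<subseteq> A" using l unfolding LL_def by auto
    have e: "l = take k l @ l ! k # drop (Suc k) l" using k len by (simp add: id_take_nth_drop)
    have "(take k l, l ! k, drop (Suc k) l) \<in> LL A k \<times> (A \<times> LL A j)"
      unfolding LL_def j_def using len sl k
      by (auto dest: in_set_takeD in_set_dropD intro: nth_mem)
    then show "\<exists>u\<in>LL A k \<times> (A \<times> LL A j). l = (case u of (p, S, s) \<Rightarrow> p @ S # s)"
      using e by force
  qed
  have "(\<Sum>l\<in>LL A K. h l) = (\<Sum>u\<in>LL A k \<times> (A \<times> LL A j). h (case u of (p, S, s) \<Rightarrow> p @ S # s))"
    using sum.reindex_bij_betw[OF bij, of h] by simp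
  also have "\<dots> = (\<Sum>p\<in>LL A k. \<Sum>S\<in>A. \<Sum>s\<in>LL A j. h (p @ S # s))"
    by (simp add: sum.cartesian_product split_def)
  finally show ?thesis unfolding j_def .
qed

lemma expect_swap:
  fixes F :: "'c \<Rightarrow> 'b \<Rightarrow> real"
  assumes fin: "finite A" and ne: "A \<noteq> {}" and k: "k < K"
    and loc: "\<And>ss ss'. (\<forall>j<k. ss j = ss' j) \<Longrightarrow> Y ss = Y ss'"
  shows "(\<Sum>l\<in>LL A K. F (Y (\<lambda>j. l ! j)) (l ! k))
       = (\<Sum>l\<in>LL A K. (\<Sum>S\<in>A. F (Y (\<lambda>j. l ! j)) S) / real (card A))"
proof -
  define j where "j = K - Suc k"
  have cA: "real (card A) > 0" using fin ne by (simp add: card_gt_0_iff)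
  have Yp: "Y (\<lambda>i. (p @ S # s) ! i) = Y (\<lambda>i. p ! i)" if "p \<in> LL A k" for p S s
    using that unfolding LL_def by (intro loc) (auto simp: nth_append)
  have nk: "(p @ S # s) ! k = S" if "p \<in> LL A k" for p S s
    using that unfolding LL_def by (simp add: nth_append)
  have "(\<Sum>l\<in>LL A K. F (Y (\<lambda>j. l ! j)) (l ! k))
      = (\<Sum>p\<in>LL A k. \<Sum>S\<in>A. \<Sum>s\<in>LL A j. F (Y (\<lambda>i. p ! i)) S)"
    unfolding decomp[OF fin k] j_def using Yp nk by (intro sum.cong refl) auto
  also have "\<dots> = (\<Sum>p\<in>LL A k. real (card (LL A j)) * (\<Sum>S\<in>A. F (Y (\<lambda>i. p ! i)) S))"
    by (simp add: sum_distrib_left)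
  also have "\<dots> = (\<Sum>p\<in>LL A k. \<Sum>S\<in>A. \<Sum>s\<in>LL A j. (\<Sum>T\<in>A. F (Y (\<lambda>i. p ! i)) T) / real (card A))"
    using cA by (simp add: field_simps)
  also have "\<dots> = (\<Sum>l\<in>LL A K. (\<Sum>S\<in>A. F (Y (\<lambda>j. l ! j)) S) / real (card A))"
    unfolding decomp[OF fin k] j_def using Yp by (intro sum.cong refl) auto
  finally show ?thesis .
qed

lemma count_batches:
  assumes i: "i < n" and B: "1 \<le> B"
  shows "card {S \<in> batches n B. i \<in> S} = (n - 1) choose (B - 1)"
proof -
  define T where "T = {U. U \<subseteq> {..<n} - {i} \<and> card U = B - 1}"
  have eq: "{S \<in> batches n B. i \<in> S} = insert i ` T"
  proof
    show "{S \<in> batches n B. i \<in> S} \<subseteq> insert i ` T"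
    proof
      fix S assume S: "S \<in> {S \<in> batches n B. i \<in> S}"
      then have "S \<subseteq> {..<n}" "card S = B" "i \<in> S" unfolding batches_def by auto
      moreover have "finite S" using \<open>S \<subseteq> {..<n}\<close> finite_subset by blast
      ultimately have "S - {i} \<in> T" "S = insert i (S - {i})" unfolding T_def by auto
      then show "S \<in> insert i ` T" by blast
    qed
  next
    show "insert i ` T \<subseteq> {S \<in> batches n B. i \<in> S}"
    proof
      fix S assume "S \<in> insert i ` T"
      then obtain U where U: "U \<in> T" "S = insert i U" by blast
      have "finite U" using U unfolding T_def using finite_subset by blast
      moreover have "i \<notin> U" using U unfolding T_def by auto
      ultimately have "card S = Suc (card U)" using U by simp
      moreover have "card U = B - 1" using U unfolding T_def by simp
      ultimately have "card S = B" using B by simp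
      then show "S \<in> {S \<in> batches n B. i \<in> S}" using U i unfolding batches_def T_def by auto
    qed
  qed
  have inj: "inj_on (insert i) T"
  proof (rule inj_onI)
    fix U V assume U: "U \<in> T" and V: "V \<in> T" and e: "insert i U = insert i V"
    have "i \<notin> U" "i \<notin> V" using U V unfolding T_def by auto
    then have "U = insert i U - {i}" "V = insert i V - {i}" by auto
    then show "U = V" using e by simp
  qed
  have "card {S \<in> batches n B. i \<in> S} = card T" unfolding eq using card_image[OF inj] .
  also have "\<dots> = card ({..<n} - {i}) choose (B - 1)" unfolding T_def by (rule n_subsets) simp
  also have "card ({..<n} - {i}) = n - 1" using i by simp
  finally show ?thesis .
qed

lemma batch_avg:
  fixes a :: "nat \<Rightarrow> real"
  assumes B: "1 \<le> B" "B \<le> n"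
  shows "(\<Sum>S\<in>batches n B. (\<Sum>i\<in>S. a i) / real (card S)) / real (card (batches n B))
       = (\<Sum>i<n. a i) / real n"
proof -
  have finb: "finite (batches n B)" unfolding batches_def
    by (rule finite_subset[of _ "Pow {..<n}"]) auto
  have cb: "card (batches n B) = n choose B" unfolding batches_def using n_subsets[of "{..<n}" B] by simp
  have "(\<Sum>S\<in>batches n B. (\<Sum>i\<in>S. a i) / real (card S)) = (\<Sum>S\<in>batches n B. (\<Sum>i\<in>S. a i)) / real B"
    by (simp add: sum_divide_distrib batches_def)
  also have "(\<Sum>S\<in>batches n B. (\<Sum>i\<in>S. a i)) = (\<Sum>S\<in>batches n B. \<Sum>i<n. if i \<in> S then a i else 0)"
  proof (rule sum.cong[OF refl])
    fix S assume "S \<in> batches n B"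
    then have "S \<subseteq> {..<n}" unfolding batches_def by auto
    then show "(\<Sum>i\<in>S. a i) = (\<Sum>i<n. if i \<in> S then a i else 0)"
      by (simp add: sum.If_cases Int_absorb1 inf.absorb_iff2)
  qed
  also have "\<dots> = (\<Sum>i<n. \<Sum>S\<in>batches n B. if i \<in> S then a i else 0)" by (rule sum.swap)
  also have "\<dots> = (\<Sum>i<n. a i * real ((n - 1) choose (B - 1)))"
  proof (rule sum.cong[OF refl])
    fix i assume "i \<in> {..<n}"
    then have "card {S \<in> batches n B. i \<in> S} = (n - 1) choose (B - 1)" using count_batches B by auto
    then show "(\<Sum>S\<in>batches n B. if i \<in> S then a i else 0) = a i * real ((n - 1) choose (B - 1))"
      using finb by (simp add: sum.If_cases mult.commute Int_def conj_commute)
  qed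
  also have "\<dots> = (\<Sum>i<n. a i) * real ((n - 1) choose (B - 1))" by (simp add: sum_distrib_right)
  finally have e: "(\<Sum>S\<in>batches n B. (\<Sum>i\<in>S. a i) / real (card S)) = (\<Sum>i<n. a i) * real ((n - 1) choose (B - 1)) / real B" .
  have tb: "real B * real (n choose B) = real n * real ((n - 1) choose (B - 1))"
    using times_binomial_minus1_eq[of B n] B by (metis of_nat_mult One_nat_def le_simps(3) zero_less_one)
  have pos: "real (n choose B) > 0" using B by simp
  have Bp: "real B > 0" "real n > 0" using B by auto
  show ?thesis unfolding e cb using tb pos Bp
    by (simp add: field_simps)
qed




lemma state_local:
  "(\<forall>j\<le>k. ss j = ss' j) \<Longrightarrow> sgd_state fs ls \<gamma>b x0 ss k = sgd_state fs ls \<gamma>b x0 ss' k"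
  by (induction k) (auto simp: Let_def)

context sgdsetup begin

lemma X_local: "(\<forall>j<k. ss j = ss' j) \<Longrightarrow> X ss k = X ss' k"
proof (cases k)
  case 0 then show ?thesis by simp
next
  case (Suc m)
  assume a: "\<forall>j<k. ss j = ss' j"
  have "sgd_state fs ls \<gamma>b x0 ss m = sgd_state fs ls \<gamma>b x0 ss' m"
    using a Suc by (intro state_local) auto
  moreover have "ss m = ss' m" using a Suc by auto
  ultimately show ?thesis unfolding Suc XS by simp
qed

definition "Lt = max Lmax (1 / (2 * \<gamma>b))"

lemma mlow_inv: "1 / mlow = 2 * Lt"
proof (cases "1 / (2 * Lmax) \<le> \<gamma>b")
  case True
  then have "mlow = 1 / (2 * Lmax)" unfolding mlow_def by simp
  moreover have "1 / (2 * \<gamma>b) \<le> Lmax" using True Lmax_pos gb_pos by (simp add: field_simps)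
  ultimately show ?thesis unfolding Lt_def by simp
next
  case False
  then have "mlow = \<gamma>b" unfolding mlow_def by simp
  moreover have "Lmax \<le> 1 / (2 * \<gamma>b)" using False Lmax_pos gb_pos by (simp add: field_simps)
  ultimately show ?thesis unfolding Lt_def by (simp add: max_def)
qed

lemma D2_nonneg: "0 \<le> D2" unfolding D2_def by (rule order_trans[OF _ max.cobounded1]) simp

lemma pointwise:
  assumes l: "l \<in> LL A K" and K: "K \<ge> 1"
  shows "(\<Sum>k<K. (2 - 1 / cc k) * (fS fs (l ! k) (X (\<lambda>j. l ! j) k) - fS fs (l ! k) xstar))
     \<le> 2 * Lt * D2 * sqrt (real K) + (\<Sum>k<K. \<sigma> (l ! k) / cc k)"
proof -
  define ss where "ss = (\<lambda>j. l ! j)"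
  have ssA: "ss j \<in> A" if "j < K" for j
    using l that unfolding LL_def ss_def by auto
  define r where "r = (\<lambda>k. (norm (X ss k - xstar))\<^sup>2)"
  have "(\<Sum>k<K. (2 - 1 / cc k) * (fS fs (ss k) (X ss k) - fS fs (ss k) xstar))
      \<le> (\<Sum>k<K. (r k - r (Suc k)) / \<Gamma> ss k + \<sigma> (ss k) / cc k)"
    unfolding r_def using ssA by (intro sum_mono main_step) auto
  also have "\<dots> = (\<Sum>k<K. (r k - r (Suc k)) / \<Gamma> ss k) + (\<Sum>k<K. \<sigma> (ss k) / cc k)"
    by (simp add: sum.distrib)
  also have "(\<Sum>k<K. (r k - r (Suc k)) / \<Gamma> ss k) \<le> D2 / \<Gamma> ss (K - 1)"
  proof (rule telescope[OF K])
    show "r k \<le> D2" if "k < K" for k unfolding r_def using that ssA by (intro rbound) auto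
    show "0 \<le> r K" unfolding r_def by simp
    show "\<Gamma> ss k > 0" if "k < K" for k using that ssA by (intro gamma_pos) auto
    show "\<Gamma> ss (Suc k) \<le> \<Gamma> ss k" if "Suc k < K" for k using that ssA by (intro gamma_dec) auto
  qed
  also have "D2 / \<Gamma> ss (K - 1) \<le> D2 * (cc (K - 1) / mlow)"
  proof -
    have "1 / \<Gamma> ss (K - 1) \<le> cc (K - 1) / mlow" using ssA K by (intro gamma_lower) auto
    then have "D2 * (1 / \<Gamma> ss (K - 1)) \<le> D2 * (cc (K - 1) / mlow)"
      using D2_nonneg by (rule mult_left_mono)
    then show ?thesis by simp
  qed
  also have "D2 * (cc (K - 1) / mlow) = 2 * Lt * D2 * sqrt (real K)"
  proof -
    have "cc (K - 1) = sqrt (real K)" unfolding cc_def using K by (simp add: of_nat_diff)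
    moreover have "cc (K - 1) / mlow = cc (K - 1) * (1 / mlow)" by simp
    ultimately show ?thesis unfolding mlow_inv by simp
  qed
  finally show ?thesis unfolding ss_def by simp
qed

lemma jensen:
  assumes K: "K \<ge> 1"
  shows "real K * fS fs {..<n} ((1 / real K) *\<^sub>R (\<Sum>k<K. y k)) \<le> (\<Sum>k<K. fS fs {..<n} (y k))"
proof -
  define xb where "xb = (1 / real K) *\<^sub>R (\<Sum>k<K. y k)"
  define G where "G = gS {..<n} xb"
  have ne: "{..<n} \<noteq> {}" using n_pos by (simp add: lessThan_empty_iff)
  have "(\<Sum>k<K. fS fs {..<n} xb + G \<bullet> (y k - xb)) \<le> (\<Sum>k<K. fS fs {..<n} (y k))"
  proof (rule sum_mono)
    fix k
    have "fS fs {..<n} xb + G \<bullet> (y k - xb) + \<mu>min / 2 * (norm (y k - xb))\<^sup>2 \<le> fS fs {..<n} (y k)"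
      unfolding G_def using scS ne by blast
    moreover have "0 \<le> \<mu>min / 2 * (norm (y k - xb))\<^sup>2" using mumin_pos by simp
    ultimately show "fS fs {..<n} xb + G \<bullet> (y k - xb) \<le> fS fs {..<n} (y k)" by linarith
  qed
  moreover have "(\<Sum>k<K. G \<bullet> (y k - xb)) = 0"
  proof -
    have "(\<Sum>k<K. G \<bullet> (y k - xb)) = G \<bullet> ((\<Sum>k<K. y k) - real K *\<^sub>R xb)"
      by (simp add: inner_sum_right inner_diff_right sum_subtractf)
    also have "real K *\<^sub>R xb = (\<Sum>k<K. y k)" unfolding xb_def using K by simp
    finally show ?thesis by simp
  qed
  ultimately show ?thesis unfolding xb_def[symmetric] by (simp add: sum.distrib)
qed

lemma fS_all: "fS fs {..<n} x = (\<Sum>i<n. fs i x) / real n" unfolding fS_def by simp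

lemma avg_f: "(\<Sum>S\<in>A. fS fs S x - fS fs S xstar) / real (card A) = fS fs {..<n} x - fS fs {..<n} xstar"
proof -
  have "(\<Sum>S\<in>A. fS fs S x - fS fs S xstar) / real (card A)
     = (\<Sum>S\<in>A. fS fs S x) / real (card A) - (\<Sum>S\<in>A. fS fs S xstar) / real (card A)"
    by (simp add: sum_subtractf diff_divide_distrib)
  moreover have h: "(\<Sum>S\<in>A. fS fs S y) / real (card A) = fS fs {..<n} y" for y
    unfolding A_def fS_all unfolding fS_def using batch_avg[OF B1 Bn, of "\<lambda>i. fs i y"] by simp
  ultimately show ?thesis by (simp only: h)
qed

end



context sgdsetup begin

theorem final:
  assumes K: "K \<ge> 1"
  shows "expect_seq n B K (\<lambda>l. fS fs {..<n} ((1 / real K) *\<^sub>R (\<Sum>k<K. X (\<lambda>j. l ! j) k)) - fS fs {..<n} xstar)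
     \<le> (2 * Lt * D2 + 2 * ((\<Sum>S\<in>A. \<sigma> S) / real (card A))) / sqrt (real K)"
proof -
  define f where "f = fS fs {..<n}"
  define L where "L = LL A K"
  define N where "N = real (card L)"
  define xs where "xs = (\<lambda>l k. X (\<lambda>j. l ! j) k)"
  define \<sigma>B where "\<sigma>B = (\<Sum>S\<in>A. \<sigma> S) / real (card A)"
  define C where "C = 2 * Lt * D2 * sqrt (real K)"
  define q where "q = (\<lambda>k. 2 - 1 / cc k)"
  have finL: "finite L" unfolding L_def using LL_finite A_finite by blast
  have Npos: "N > 0" unfolding N_def L_def using LL_finite[OF A_finite] LL_ne[OF A_ne]
    by (simp add: card_gt_0_iff)
  have cA: "real (card A) > 0" using A_finite A_ne by (simp add: card_gt_0_iff)
  have \<sigma>B0: "0 \<le> \<sigma>B" unfolding \<sigma>B_def using sigma_nonneg cA by (simp add: sum_nonneg)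
  have Kp: "real K > 0" using K by simp
  have bs: "batch_seqs n B K = L" unfolding batch_seqs_def L_def LL_def A_def by simp
  have q1: "1 \<le> q k" for k unfolding q_def using cc_ge1[of k] by (simp add: divide_le_eq)
  have fstar: "0 \<le> f x - f xstar" for x unfolding f_def using xstar_min by simp
  have sa: "(\<Sum>l\<in>L. real K * (f ((1 / real K) *\<^sub>R (\<Sum>k<K. xs l k)) - f xstar))
      \<le> (\<Sum>l\<in>L. \<Sum>k<K. f (xs l k) - f xstar)"
  proof (rule sum_mono)
    fix l
    have "real K * f ((1 / real K) *\<^sub>R (\<Sum>k<K. xs l k)) \<le> (\<Sum>k<K. f (xs l k))"
      unfolding f_def by (rule jensen[OF K])
    then show "real K * (f ((1 / real K) *\<^sub>R (\<Sum>k<K. xs l k)) - f xstar) \<le> (\<Sum>k<K. f (xs l k) - f xstar)"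
      by (simp add: sum_subtractf right_diff_distrib)
  qed
  also have "\<dots> = (\<Sum>k<K. \<Sum>l\<in>L. f (xs l k) - f xstar)" by (rule sum.swap)
  also have "\<dots> \<le> (\<Sum>k<K. \<Sum>l\<in>L. q k * (fS fs (l ! k) (xs l k) - fS fs (l ! k) xstar))"
  proof (rule sum_mono)
    fix k assume "k \<in> {..<K}"
    then have k: "k < K" by simp
    have "(\<Sum>l\<in>L. fS fs (l ! k) (xs l k) - fS fs (l ! k) xstar)
        = (\<Sum>l\<in>L. (\<Sum>S\<in>A. fS fs S (xs l k) - fS fs S xstar) / real (card A))"
      unfolding L_def xs_def
      using expect_swap[where Y="\<lambda>ss. X ss k" and F="\<lambda>x S. fS fs S x - fS fs S xstar", OF A_finite A_ne k X_local]
      by simp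
    also have "\<dots> = (\<Sum>l\<in>L. f (xs l k) - f xstar)" unfolding f_def avg_f ..
    finally have e: "(\<Sum>l\<in>L. f (xs l k) - f xstar) = (\<Sum>l\<in>L. fS fs (l ! k) (xs l k) - fS fs (l ! k) xstar)" by simp
    have nn: "0 \<le> (\<Sum>l\<in>L. f (xs l k) - f xstar)" using fstar by (simp add: sum_nonneg)
    have "(\<Sum>l\<in>L. f (xs l k) - f xstar) \<le> q k * (\<Sum>l\<in>L. f (xs l k) - f xstar)"
      using q1[of k] nn by (simp add: mult_le_cancel_right1)
    also have "\<dots> = (\<Sum>l\<in>L. q k * (fS fs (l ! k) (xs l k) - fS fs (l ! k) xstar))"
      unfolding e by (simp add: sum_distrib_left)
    finally show "(\<Sum>l\<in>L. f (xs l k) - f xstar) \<le> (\<Sum>l\<in>L. q k * (fS fs (l ! k) (xs l k) - fS fs (l ! k) xstar))" .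
  qed
  also have "\<dots> = (\<Sum>l\<in>L. \<Sum>k<K. q k * (fS fs (l ! k) (xs l k) - fS fs (l ! k) xstar))" by (rule sum.swap)
  also have "\<dots> \<le> (\<Sum>l\<in>L. C + (\<Sum>k<K. \<sigma> (l ! k) / cc k))"
    unfolding q_def xs_def C_def L_def using pointwise K by (intro sum_mono) auto
  also have "\<dots> = N * C + (\<Sum>k<K. \<Sum>l\<in>L. \<sigma> (l ! k) / cc k)"
  proof -
    have "(\<Sum>l\<in>L. C + (\<Sum>k<K. \<sigma> (l ! k) / cc k)) = (\<Sum>l\<in>L. C) + (\<Sum>l\<in>L. \<Sum>k<K. \<sigma> (l ! k) / cc k)"
      by (rule sum.distrib)
    also have "(\<Sum>l\<in>L. \<Sum>k<K. \<sigma> (l ! k) / cc k) = (\<Sum>k<K. \<Sum>l\<in>L. \<sigma> (l ! k) / cc k)"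
      by (rule sum.swap)
    finally show ?thesis unfolding N_def by simp
  qed
  also have "(\<Sum>k<K. \<Sum>l\<in>L. \<sigma> (l ! k) / cc k) = (\<Sum>k<K. N * \<sigma>B / cc k)"
  proof (rule sum.cong[OF refl])
    fix k assume "k \<in> {..<K}"
    then have k: "k < K" by simp
    have "(\<Sum>l\<in>L. \<sigma> (l ! k)) = (\<Sum>l\<in>L. (\<Sum>S\<in>A. \<sigma> S) / real (card A))"
      unfolding L_def
      using expect_swap[where Y="\<lambda>ss. (0::nat)" and F="\<lambda>x S. \<sigma> S", OF A_finite A_ne k] by simp
    also have "\<dots> = N * \<sigma>B" unfolding N_def \<sigma>B_def by simp
    finally show "(\<Sum>l\<in>L. \<sigma> (l ! k) / cc k) = N * \<sigma>B / cc k"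
      by (simp add: sum_divide_distrib[symmetric])
  qed
  also have "\<dots> = N * \<sigma>B * (\<Sum>k<K. 1 / sqrt (real k + 1))"
    unfolding cc_def by (simp add: sum_distrib_left)
  also have "\<dots> \<le> N * \<sigma>B * (2 * sqrt (real K))"
    using Npos \<sigma>B0 sqrt_sum by (intro mult_left_mono) auto
  finally have tot: "real K * (\<Sum>l\<in>L. f ((1 / real K) *\<^sub>R (\<Sum>k<K. xs l k)) - f xstar)
      \<le> N * C + N * \<sigma>B * (2 * sqrt (real K))"
    by (simp add: sum_distrib_left)
  have "expect_seq n B K (\<lambda>l. f ((1 / real K) *\<^sub>R (\<Sum>k<K. xs l k)) - f xstar)
      = (\<Sum>l\<in>L. f ((1 / real K) *\<^sub>R (\<Sum>k<K. xs l k)) - f xstar) / N"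
    unfolding expect_seq_def bs N_def ..
  also have "\<dots> \<le> (N * C + N * \<sigma>B * (2 * sqrt (real K))) / (real K * N)"
    using tot Npos Kp by (simp add: field_simps)
  also have "\<dots> = (C + \<sigma>B * (2 * sqrt (real K))) / real K"
  proof -
    have "N * C + N * \<sigma>B * (2 * sqrt (real K)) = N * (C + \<sigma>B * (2 * sqrt (real K)))"
      by (simp add: algebra_simps)
    moreover have "real K * N = N * real K" by simp
    ultimately show ?thesis using Npos by (simp only: mult_divide_mult_cancel_left)
  qed
  also have "\<dots> = (2 * Lt * D2 + 2 * \<sigma>B) / sqrt (real K)"
  proof -
    have s: "real K = sqrt (real K) * sqrt (real K)" by simp
    have sp: "sqrt (real K) > 0" using Kp by simp
    have num: "C + \<sigma>B * (2 * sqrt (real K)) = sqrt (real K) * (2 * Lt * D2 + 2 * \<sigma>B)"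
      unfolding C_def by (simp add: algebra_simps)
    have "(C + \<sigma>B * (2 * sqrt (real K))) / real K
        = (sqrt (real K) * (2 * Lt * D2 + 2 * \<sigma>B)) / (sqrt (real K) * sqrt (real K))"
      by (simp only: num flip: s)
    also have "\<dots> = (2 * Lt * D2 + 2 * \<sigma>B) / sqrt (real K)"
      by (rule mult_divide_mult_cancel_left) (use sp in simp)
    finally show ?thesis .
  qed
  finally show ?thesis unfolding f_def xs_def \<sigma>B_def .
qed

end

theorem theorem4:
  fixes fs :: "nat \<Rightarrow> real ^ 'd \<Rightarrow> real"
    and \<mu> L :: "nat \<Rightarrow> real"
    and n B K :: nat
    and ls :: "nat set \<Rightarrow> real"
    and \<gamma>b :: real
    and x0 xstar :: "real ^ 'd"
  assumes n_pos: "n \<ge> 1"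
    and B_range: "1 \<le> B" "B \<le> n"
    and mu_pos: "\<forall>i<n. \<mu> i > 0"
    and sc: "\<forall>i<n. strongly_convex (fs i) (\<mu> i)"
    and sm: "\<forall>i<n. L_smooth (fs i) (L i)"
    and ls_le: "\<forall>S\<in>batches n B. ls S \<le> (INF x. fS fs S x)"
    and xstar_min: "\<forall>x. (\<Sum>i<n. fs i x) / real n \<ge> (\<Sum>i<n. fs i xstar) / real n"
    and gb_pos: "\<gamma>b > 0"
    and K_pos: "K \<ge> 1"
  shows
    "let f = (\<lambda>x. (\<Sum>i<n. fs i x) / real n);
         Lmax = Max (L ` {..<n});
         \<mu>min = Min (\<mu> ` {..<n});
         Lt = max Lmax (1 / (2 * \<gamma>b));
         \<sigma>B = (\<Sum>S\<in>batches n B. fS fs S xstar - ls S) / real (card (batches n B));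
         \<sigma>Bmax = Max ((\<lambda>S. fS fs S xstar - ls S) ` batches n B);
         Dmax = max ((norm (x0 - xstar))\<^sup>2)
                    (2 * \<gamma>b * \<sigma>Bmax / min (\<mu>min / (2 * Lmax)) (\<mu>min * \<gamma>b));
         xbar = (\<lambda>l. (1 / real K) *\<^sub>R (\<Sum>k<K. sgd_x fs ls \<gamma>b x0 (\<lambda>j. l ! j) k))
     in expect_seq n B K (\<lambda>l. f (xbar l) - f xstar)
          \<le> (2 * Lt * Dmax + 2 * \<sigma>B) / sqrt (real K)"
  proof -
  define g where "g = (\<lambda>i. SOME g. (\<forall>x. GDERIV (fs i) x :> g x) \<and> (\<forall>x y. norm (g x - g y) \<le> L i * norm (x - y)))"
  have gprop: "(\<forall>x. GDERIV (fs i) x :> g i x) \<and> (\<forall>x y. norm (g i x - g i y) \<le> L i * norm (x - y))"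
    if i: "i < n" for i
  proof -
    have "\<exists>g. (\<forall>x. GDERIV (fs i) x :> g x) \<and> (\<forall>x y. norm (g x - g y) \<le> L i * norm (x - y))"
      using sm i unfolding L_smooth_def by blast
    then show ?thesis unfolding g_def by (rule someI_ex)
  qed
  interpret sgdsetup fs g \<mu> L n B ls \<gamma>b x0 xstar
  proof
    show "n \<ge> 1" by (rule n_pos)
    show "1 \<le> B" by (rule B_range(1))
    show "B \<le> n" by (rule B_range(2))
    show "\<mu> i > 0" if "i < n" for i using mu_pos that by blast
    show gdi: "GDERIV (fs i) x :> g i x" if "i < n" for i x using gprop[OF that] by blast
    show "fs i x + g i x \<bullet> (y - x) + \<mu> i / 2 * (norm (y - x))\<^sup>2 \<le> fs i y" if "i < n" for i x y
      using sc_first_order[of "fs i" "\<mu> i" x "g i x" y] sc that gdi by blast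
    show "fs i y \<le> fs i x + g i x \<bullet> (y - x) + L i / 2 * (norm (y - x))\<^sup>2" if "i < n" for i x y
      using descent[of "fs i" "g i" "L i" y x] gprop[OF that] by blast
    show "ls S \<le> (INF x. fS fs S x)" if "S \<in> batches n B" for S using ls_le that by blast
    show "fS fs {..<n} xstar \<le> fS fs {..<n} x" for x using xstar_min unfolding fS_def by simp
    show "\<gamma>b > 0" by (rule gb_pos)
    show "\<exists>v::real ^ 'd. v \<noteq> 0" using nonzero_Basis[OF SOME_Basis] by blast
  qed
  have main: "expect_seq n B K (\<lambda>l. fS fs {..<n} ((1 / real K) *\<^sub>R (\<Sum>k<K. X (\<lambda>j. l ! j) k)) - fS fs {..<n} xstar)
     \<le> (2 * Lt * D2 + 2 * ((\<Sum>S\<in>A. \<sigma> S) / real (card A))) / sqrt (real K)"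
    by (rule final[OF K_pos])
  show ?thesis
    using main unfolding Let_def sgd_x_def fS_all Lt_def D2_def \<sigma>max_def \<mu>min_def Lmax_def A_def \<sigma>_def[abs_def]
    by simp
qed

end
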